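(* Let $A\subset\mathbb{R}^n$ and let $w\in\mathbb{R}^n$ be such that $0\notin\overline A$ and $w\notin\overline A$. Let $\Phi(x)=\frac{x}{|x|^2}$ be the geometric inversion with respect to the origin and $\Psi(x)=\frac{x-w}{|x-w|^2}$ the geometric inversion with respect to the point $w$. Then $f=\Psi\circ\Phi:\Phi(A)\to\Psi(A)$ is a bi-Lipschitz mapping. In particular, $\overline{\dim}_B\Phi(A)=\overline{\dim}_B\Psi(A)$ and $\underline{\dim}_B\Phi(A)=\underline{\dim}_B\Psi(A)$.
   Context: $|\cdot|$ denotes the Euclidean norm. A map $f$ is bi-Lipschitz if there are constants $c_1,c_2>0$ with $c_1|a-b|\le|f(a)-f(b)|\le c_2|a-b|$ for all $a,b$ in its domain. For a nonempty bounded set $B\subset\mathbb{R}^n$, with $B_\varepsilon$ its Euclidean $\varepsilon$-neighbourhood and $|B_\varepsilon|$ its $n$-dimensional Lebesgue measure, the upper (resp. lower) $s$-dimensional Minkowski content is $\mathcal M^{*s}(B)=\limsup_{\varepsilon\to0}|B_\varepsilon|/\varepsilon^{n-s}$ (resp. $\mathcal M_*^s(B)$ with $\liminf$), and the upper (resp. lower) box dimension is $\overline{\dim}_BB=\inf\{s\ge0:\mathcal M^{*s}(B)=0\}$ (resp. $\underline{\dim}_BB=\inf\{s\ge0:\mathcal M_*^{s}(B)=0\}$). *)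

theory Defs
  imports "HOL-Analysis.Analysis"
begin

definition inversion :: "'a::euclidean_space \<Rightarrow> 'a \<Rightarrow> 'a" where
  "inversion w x = (1 / (norm (x - w))\<^sup>2) *\<^sub>R (x - w)"

definition bi_lipschitz_on :: "'a::metric_space set \<Rightarrow> ('a \<Rightarrow> 'b::metric_space) \<Rightarrow> bool" where
  "bi_lipschitz_on S f \<longleftrightarrow> (\<exists>c1 c2. c1 > 0 \<and> c2 > 0 \<and>
     (\<forall>a\<in>S. \<forall>b\<in>S. c1 * dist a b \<le> dist (f a) (f b) \<and> dist (f a) (f b) \<le> c2 * dist a b))"

definition eps_nbhd :: "'a::euclidean_space set \<Rightarrow> real \<Rightarrow> 'a set" where
  "eps_nbhd B \<epsilon> = (\<Union>b\<in>B. ball b \<epsilon>)"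

definition upper_minkowski_content :: "real \<Rightarrow> 'a::euclidean_space set \<Rightarrow> ereal" where
  "upper_minkowski_content s B =
     Limsup (at_right 0) (\<lambda>\<epsilon>. enn2ereal (emeasure lborel (eps_nbhd B \<epsilon>)) / ereal (\<epsilon> powr (real DIM('a) - s)))"

definition lower_minkowski_content :: "real \<Rightarrow> 'a::euclidean_space set \<Rightarrow> ereal" where
  "lower_minkowski_content s B =
     Liminf (at_right 0) (\<lambda>\<epsilon>. enn2ereal (emeasure lborel (eps_nbhd B \<epsilon>)) / ereal (\<epsilon> powr (real DIM('a) - s)))"

definition upper_box_dim :: "'a::euclidean_space set \<Rightarrow> real" where
  "upper_box_dim B = Inf {s. s \<ge> 0 \<and> upper_minkowski_content s B = 0}"

definition lower_box_dim :: "'a::euclidean_space set \<Rightarrow> real" where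
  "lower_box_dim B = Inf {s. s \<ge> 0 \<and> lower_minkowski_content s B = 0}"

end

theory Submission
  imports Defs
begin

lemma pack_bound:
  fixes \<phi> :: "'b \<Rightarrow> 'a::euclidean_space" and \<psi> :: "'b \<Rightarrow> 'a"
  assumes bnd: "bounded (\<psi> ` A)" and L: "L > 0"
    and lip: "\<And>x y. x \<in> A \<Longrightarrow> y \<in> A \<Longrightarrow> dist (\<psi> x) (\<psi> y) \<le> L * dist (\<phi> x) (\<phi> y)"
    and e: "e > 0"
  shows "emeasure lborel (eps_nbhd (\<psi> ` A) e)
     \<le> ennreal ((4*L)^DIM('a)) * emeasure lborel (eps_nbhd (\<phi> ` A) (e/(2*L)))"
proof -
  define sep where "sep S \<longleftrightarrow> S \<subseteq> A \<and> finite S \<and> (\<forall>x\<in>S. \<forall>y\<in>S. x \<noteq> y \<longrightarrow> e \<le> dist (\<psi> x) (\<psi> y))" for S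
  have "compact (closure (\<psi> ` A))" using bnd compact_closure by blast
  moreover have "closure (\<psi> ` A) \<subseteq> (\<Union>c\<in>closure (\<psi> ` A). ball c (e/2))"
    using e by auto
  ultimately obtain T where T: "finite T" "closure (\<psi> ` A) \<subseteq> (\<Union>c\<in>T. ball c (e/2))"
    by (metis compactE_image open_ball)
  have card_bound: "card S \<le> card T" if S: "sep S" for S
  proof -
    define h where "h s = (SOME c. c \<in> T \<and> \<psi> s \<in> ball c (e/2))" for s
    have h: "h s \<in> T \<and> \<psi> s \<in> ball (h s) (e/2)" if "s \<in> S" for s
    proof -
      have "\<psi> s \<in> closure (\<psi> ` A)" using S that closure_subset unfolding sep_def by blast
      then have "\<exists>c. c \<in> T \<and> \<psi> s \<in> ball c (e/2)" using T by blast
      then show ?thesis unfolding h_def by (rule someI_ex)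
    qed
    have "inj_on h S"
    proof (rule inj_onI, rule ccontr)
      fix s t assume st: "s \<in> S" "t \<in> S" "h s = h t" "s \<noteq> t"
      have "dist (\<psi> s) (\<psi> t) \<le> dist (\<psi> s) (h s) + dist (h s) (\<psi> t)" by (rule dist_triangle)
      also have "\<dots> < e" using h[OF st(1)] h[OF st(2)] st(3) by (simp add: dist_commute)
      finally show False using S st unfolding sep_def by force
    qed
    then show ?thesis using h T(1) by (intro card_inj_on_le) auto
  qed
  have "sep {}" unfolding sep_def by auto
  then obtain P where P: "sep P" and Pmax: "\<And>S. sep S \<Longrightarrow> card S \<le> card P"
    using Lattices_Big.ex_has_greatest_nat[of sep "{}" card "Suc (card T)"] card_bound
    by (metis less_Suc_eq_le)
  have cover: "\<exists>p\<in>P. dist (\<psi> a) (\<psi> p) < e" if a: "a \<in> A" for a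
  proof (rule ccontr)
    assume "\<not> ?thesis"
    then have far: "\<forall>p\<in>P. e \<le> dist (\<psi> a) (\<psi> p)" by auto
    then have "a \<notin> P" using e by force
    have "sep (insert a P)" using P far a unfolding sep_def by (auto simp: dist_commute)
    then have "card (insert a P) \<le> card P" by (rule Pmax)
    then show False using \<open>a \<notin> P\<close> P unfolding sep_def by simp
  qed
  have finP: "finite P" using P unfolding sep_def by auto
  define r where "r = e / (2*L)"
  have r: "r > 0" using e L by (simp add: r_def)
  define \<omega> where "\<omega> = unit_ball_vol (real DIM('a))"
  have ball_meas: "emeasure lborel (ball c t) = ennreal (\<omega> * t ^ DIM('a))" if "t \<ge> 0" for c :: 'a and t
    using emeasure_ball[OF that] by (simp add: \<omega>_def)
  have up: "emeasure lborel (eps_nbhd (\<psi> ` A) e) \<le> of_nat (card P) * ennreal (\<omega> * (2*e) ^ DIM('a))"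
  proof -
    have "eps_nbhd (\<psi> ` A) e \<subseteq> (\<Union>p\<in>P. ball (\<psi> p) (2*e))"
    proof
      fix z assume "z \<in> eps_nbhd (\<psi> ` A) e"
      then obtain a where a: "a \<in> A" "dist (\<psi> a) z < e" unfolding eps_nbhd_def by auto
      obtain p where p: "p \<in> P" "dist (\<psi> a) (\<psi> p) < e" using cover[OF a(1)] by blast
      have "dist (\<psi> p) z \<le> dist (\<psi> p) (\<psi> a) + dist (\<psi> a) z" by (rule dist_triangle)
      also have "\<dots> < 2*e" using a p by (simp add: dist_commute)
      finally show "z \<in> (\<Union>p\<in>P. ball (\<psi> p) (2*e))" using p by auto
    qed
    then have "emeasure lborel (eps_nbhd (\<psi> ` A) e) \<le> emeasure lborel (\<Union>p\<in>P. ball (\<psi> p) (2*e))"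
      by (intro emeasure_mono) (auto intro: borel_open)
    also have "\<dots> \<le> (\<Sum>p\<in>P. emeasure lborel (ball (\<psi> p) (2*e)))"
      using finP by (intro emeasure_subadditive_finite) auto
    also have "\<dots> = of_nat (card P) * ennreal (\<omega> * (2*e) ^ DIM('a))"
      using ball_meas e by simp
    finally show ?thesis .
  qed
  have low: "of_nat (card P) * ennreal (\<omega> * r ^ DIM('a)) \<le> emeasure lborel (eps_nbhd (\<phi> ` A) r)"
  proof -
    have disj: "disjoint_family_on (\<lambda>p. ball (\<phi> p) r) P"
    unfolding disjoint_family_on_def
    proof (intro ballI impI, rule ccontr)
      fix p q assume pq: "p \<in> P" "q \<in> P" "p \<noteq> q" "ball (\<phi> p) r \<inter> ball (\<phi> q) r \<noteq> {}"
      then obtain z where z: "dist (\<phi> p) z < r" "dist (\<phi> q) z < r" by auto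
      have "dist (\<phi> p) (\<phi> q) \<le> dist (\<phi> p) z + dist z (\<phi> q)" by (rule dist_triangle)
      also have "\<dots> < 2*r" using z by (simp add: dist_commute)
      finally have "L * dist (\<phi> p) (\<phi> q) < L * (2*r)" using L by simp
      also have "L * (2*r) = e" using L by (simp add: r_def)
      finally have "dist (\<psi> p) (\<psi> q) < e" using lip[of p q] pq P unfolding sep_def by force
      then show False using P pq unfolding sep_def by force
    qed
    have "of_nat (card P) * ennreal (\<omega> * r ^ DIM('a)) = (\<Sum>p\<in>P. emeasure lborel (ball (\<phi> p) r))"
      using ball_meas r by simp
    also have "\<dots> = emeasure lborel (\<Union>p\<in>P. ball (\<phi> p) r)"
      using finP disj by (intro sum_emeasure) auto
    also have "\<dots> \<le> emeasure lborel (eps_nbhd (\<phi> ` A) r)"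
      using P unfolding sep_def eps_nbhd_def by (intro emeasure_mono) (auto intro: borel_open)
    finally show ?thesis .
  qed
  have "2*e = (4*L)*r" using L by (simp add: r_def)
  then have "(2*e) ^ DIM('a) = (4*L)^DIM('a) * r ^ DIM('a)"
    by (simp only: power_mult_distrib)
  then have pw: "real (card P) * (\<omega> * (2*e) ^ DIM('a)) = (4*L)^DIM('a) * (real (card P) * (\<omega> * r ^ DIM('a)))"
    by (simp add: mult_ac)
  have om: "\<omega> \<ge> 0" unfolding \<omega>_def by simp
  have eq: "of_nat (card P) * ennreal (\<omega> * (2*e) ^ DIM('a))
      = ennreal ((4*L)^DIM('a)) * (of_nat (card P) * ennreal (\<omega> * r ^ DIM('a)))"
  proof -
    have "of_nat (card P) * ennreal (\<omega> * (2*e) ^ DIM('a)) = ennreal (real (card P) * (\<omega> * (2*e) ^ DIM('a)))"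
      using om e by (simp add: ennreal_of_nat_eq_real_of_nat ennreal_mult)
    also have "\<dots> = ennreal ((4*L)^DIM('a) * (real (card P) * (\<omega> * r ^ DIM('a))))"
      by (simp only: pw)
    also have "\<dots> = ennreal ((4*L)^DIM('a)) * (of_nat (card P) * ennreal (\<omega> * r ^ DIM('a)))"
      using om r L by (simp add: ennreal_of_nat_eq_real_of_nat ennreal_mult)
    finally show ?thesis .
  qed
  have "emeasure lborel (eps_nbhd (\<psi> ` A) e) \<le> ennreal ((4*L)^DIM('a)) * (of_nat (card P) * ennreal (\<omega> * r ^ DIM('a)))"
    using up unfolding eq .
  also have "\<dots> \<le> ennreal ((4*L)^DIM('a)) * emeasure lborel (eps_nbhd (\<phi> ` A) r)"
    by (rule mult_left_mono[OF low]) simp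
  finally show ?thesis unfolding r_def .
qed

lemma eps_nbhd_finite:
  fixes X :: "'a::euclidean_space set"
  assumes "bounded X"
  shows "emeasure lborel (eps_nbhd X e) = ennreal (measure lborel (eps_nbhd X e))"
proof -
  obtain R where R: "\<And>x. x \<in> X \<Longrightarrow> norm x \<le> R" using assms bounded_iff by blast
  have "eps_nbhd X e \<subseteq> ball 0 (R + \<bar>e\<bar> + 1)"
  proof
    fix z assume "z \<in> eps_nbhd X e"
    then obtain x where x: "x \<in> X" "dist x z < e" unfolding eps_nbhd_def by auto
    have "norm z \<le> norm x + dist x z" by (metis dist_norm norm_triangle_sub dist_commute)
    then show "z \<in> ball 0 (R + \<bar>e\<bar> + 1)" using R[OF x(1)] x(2) by simp
  qed
  then have "emeasure lborel (eps_nbhd X e) \<le> emeasure lborel (ball (0::'a) (R + \<bar>e\<bar> + 1))"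
    by (intro emeasure_mono) auto
  also have "\<dots> < \<infinity>" by (rule emeasure_lborel_ball_finite)
  finally show ?thesis by (intro emeasure_eq_ennreal_measure) auto
qed

definition hh :: "real \<Rightarrow> 'a::euclidean_space set \<Rightarrow> real \<Rightarrow> real" where
  "hh s X e = measure lborel (eps_nbhd X e) / e powr (real DIM('a) - s)"

lemma upper_content_hh:
  fixes X :: "'a::euclidean_space set"
  assumes "bounded X"
  shows "upper_minkowski_content s X = Limsup (at_right 0) (\<lambda>e. ereal (hh s X e))"
    and "lower_minkowski_content s X = Liminf (at_right 0) (\<lambda>e. ereal (hh s X e))"
proof -
  have ev: "eventually (\<lambda>e. enn2ereal (emeasure lborel (eps_nbhd X e)) / ereal (e powr (real DIM('a) - s))
      = ereal (hh s X e)) (at_right (0::real))"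
    using eventually_at_right_less[of 0]
  proof (rule eventually_mono)
    fix e :: real assume "0 < e"
    then show "enn2ereal (emeasure lborel (eps_nbhd X e)) / ereal (e powr (real DIM('a) - s))
      = ereal (hh s X e)"
      unfolding eps_nbhd_finite[OF assms] hh_def by (simp add: enn2ereal_ennreal)
  qed
  show "upper_minkowski_content s X = Limsup (at_right 0) (\<lambda>e. ereal (hh s X e))"
    unfolding upper_minkowski_content_def by (rule Limsup_eq[OF ev])
  show "lower_minkowski_content s X = Liminf (at_right 0) (\<lambda>e. ereal (hh s X e))"
    unfolding lower_minkowski_content_def by (rule Liminf_eq[OF ev])
qed


lemma inv_norm_diff:
  fixes u v :: "'a::euclidean_space"
  assumes u: "u \<noteq> 0" and v: "v \<noteq> 0"
  shows "norm ((1/(norm u)^2) *\<^sub>R u - (1/(norm v)^2) *\<^sub>R v) = norm (u - v) / (norm u * norm v)"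
proof -
  have nu: "norm u > 0" and nv: "norm v > 0" using u v by auto
  have ip: "inner u v = ((norm u)^2 + (norm v)^2 - (norm (u - v))^2) / 2" by (rule dot_norm_neg)
  have "(norm ((1/(norm u)^2) *\<^sub>R u - (1/(norm v)^2) *\<^sub>R v))^2
      = 1/(norm u)^2 - 2 * inner u v / ((norm u)^2 * (norm v)^2) + 1/(norm v)^2"
    using nu nv
    by (simp add: power2_norm_eq_inner inner_diff_left inner_diff_right inner_commute[of v u] field_simps)
  also have "\<dots> = (norm (u - v) / (norm u * norm v))^2"
    unfolding ip using nu nv by (simp add: field_simps power2_eq_square)
  finally show ?thesis
    using nu nv by (simp add: power2_eq_iff_nonneg)
qed

lemma dist_inversion:
  fixes x y w :: "'a::euclidean_space"
  assumes "x \<noteq> w" "y \<noteq> w"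
  shows "dist (inversion w x) (inversion w y) = dist x y / (norm (x - w) * norm (y - w))"
  using inv_norm_diff[of "x - w" "y - w"] assms unfolding inversion_def dist_norm by simp

lemma inversion_invol:
  fixes x :: "'a::euclidean_space"
  assumes "x \<noteq> 0"
  shows "inversion 0 (inversion 0 x) = x"
proof -
  have n: "norm x > 0" using assms by simp
  have "norm (inversion 0 x) = 1 / norm x" unfolding inversion_def using n
    by (simp add: power2_eq_square)
  then show ?thesis unfolding inversion_def using n by (simp add: power2_eq_square)
qed

lemma norm_inversion:
  fixes x w :: "'a::euclidean_space"
  shows "norm (inversion w x) = 1 / norm (x - w)"
  unfolding inversion_def by (simp add: power2_eq_square divide_simps)

lemma content_transfer:
  fixes B C :: "'a::euclidean_space set"
  assumes bB: "bounded B" and bC: "bounded C" and K: "K > 0" and M: "M > 0"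
    and le: "\<And>e. e > 0 \<Longrightarrow> emeasure lborel (eps_nbhd C e) \<le> ennreal K * emeasure lborel (eps_nbhd B (e/M))"
  shows "upper_minkowski_content s B = 0 \<Longrightarrow> upper_minkowski_content s C = 0"
    and "lower_minkowski_content s B = 0 \<Longrightarrow> lower_minkowski_content s C = 0"
proof -
  define K' where "K' = K / M powr (real DIM('a) - s)"
  have K': "K' \<ge> 0" using K M by (simp add: K'_def)
  have hle: "hh s C e \<le> K' * hh s B (e / M)" if e: "e > 0" for e
  proof -
    have "ennreal (measure lborel (eps_nbhd C e)) \<le> ennreal (K * measure lborel (eps_nbhd B (e/M)))"
      using le[OF e] unfolding eps_nbhd_finite[OF bB] eps_nbhd_finite[OF bC]
        ennreal_mult[OF less_imp_le[OF K] measure_nonneg] .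
    then have m: "measure lborel (eps_nbhd C e) \<le> K * measure lborel (eps_nbhd B (e/M))"
      using K by (simp add: ennreal_le_iff)
    have "hh s C e \<le> K * measure lborel (eps_nbhd B (e/M)) / e powr (real DIM('a) - s)"
      unfolding hh_def using m e by (simp add: divide_right_mono)
    also have "\<dots> = K' * hh s B (e / M)"
    proof -
      let ?a = "real DIM('a) - s"
      have pd: "(e/M) powr ?a = e powr ?a / M powr ?a" using e M by (simp add: powr_divide)
      have p1: "e powr ?a > 0" "M powr ?a > 0" using e M by auto
      show ?thesis unfolding hh_def K'_def pd using p1 by (simp add: field_simps)
    qed
    finally show ?thesis .
  qed
  have fm: "filtermap (\<lambda>e. e / M) (at_right (0::real)) = at_right 0"
  proof -
    have 1: "(\<lambda>e. e / M) = times (inverse M)" by (auto simp: field_simps)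
    have 2: "filtermap (times (inverse M)) (at_right 0) = at_right (inverse M * (0::real))"
      using M by (intro filtermap_times_pos_at_right) simp
    show ?thesis unfolding 1 2 by simp
  qed
  have inj: "inj (\<lambda>e::real. e / M)" using M by (auto intro: injI)
  have ev: "eventually (\<lambda>e. ereal (hh s C e) \<le> ereal K' * ereal (hh s B (e / M))) (at_right (0::real))"
    using eventually_at_right_less[of 0] by (rule eventually_mono) (use hle in auto)
  have nb: "at_right (0::real) \<noteq> bot" by simp
  have nonneg: "eventually (\<lambda>e. 0 \<le> ereal (hh s X e)) (at_right (0::real))" for X :: "'a set"
    by (auto simp: hh_def)
  show "upper_minkowski_content s C = 0" if "upper_minkowski_content s B = 0"
  proof -
    have "Limsup (at_right 0) (\<lambda>e. ereal (hh s C e)) \<le> Limsup (at_right 0) (\<lambda>e. ereal K' * ereal (hh s B (e / M)))"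
      by (rule Limsup_mono[OF ev])
    also have "\<dots> = ereal K' * Limsup (at_right 0) (\<lambda>e. ereal (hh s B (e / M)))"
      by (rule Limsup_ereal_mult_left[OF nb K'])
    also have "Limsup (at_right 0) (\<lambda>e. ereal (hh s B (e / M))) = Limsup (at_right 0) (\<lambda>e. ereal (hh s B e))"
      using Limsup_filtermap_eq[OF inj, of "at_right 0" "\<lambda>e. ereal (hh s B e)"] fm by simp
    also have "\<dots> = 0" using that upper_content_hh[OF bB] by simp
    finally have "Limsup (at_right 0) (\<lambda>e. ereal (hh s C e)) \<le> 0" by simp
    moreover have "0 \<le> Limsup (at_right 0) (\<lambda>e. ereal (hh s C e))"
      using Liminf_bounded[OF nonneg[of C]] Liminf_le_Limsup[OF nb] by (rule order_trans)
    ultimately show ?thesis using upper_content_hh[OF bC] by simp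
  qed
  show "lower_minkowski_content s C = 0" if "lower_minkowski_content s B = 0"
  proof -
    have "Liminf (at_right 0) (\<lambda>e. ereal (hh s C e)) \<le> Liminf (at_right 0) (\<lambda>e. ereal K' * ereal (hh s B (e / M)))"
      by (rule Liminf_mono[OF ev])
    also have "\<dots> = ereal K' * Liminf (at_right 0) (\<lambda>e. ereal (hh s B (e / M)))"
      by (rule Liminf_ereal_mult_left[OF nb K'])
    also have "Liminf (at_right 0) (\<lambda>e. ereal (hh s B (e / M))) = Liminf (at_right 0) (\<lambda>e. ereal (hh s B e))"
      using Liminf_filtermap_eq[OF inj, of "at_right 0" "\<lambda>e. ereal (hh s B e)"] fm by simp
    also have "\<dots> = 0" using that upper_content_hh[OF bB] by simp
    finally have "Liminf (at_right 0) (\<lambda>e. ereal (hh s C e)) \<le> 0" by simp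
    moreover have "0 \<le> Liminf (at_right 0) (\<lambda>e. ereal (hh s C e))"
      using Liminf_bounded[OF nonneg[of C]] .
    ultimately show ?thesis using upper_content_hh[OF bC] by simp
  qed
qed

lemma ratio_bound:
  fixes a b c d D K :: real
  assumes pos: "a > 0" "b > 0" "c > 0" "d > 0" "D \<ge> 0" "K \<ge> 0"
    and ac: "a \<le> K * c" and bd: "b \<le> K * d"
  shows "D / (c * d) \<le> K^2 * (D / (a * b))"
proof -
  have "a * b \<le> (K*c) * (K*d)" using pos ac bd by (intro mult_mono) auto
  then have "D * (a * b) \<le> D * ((K*c) * (K*d))" using pos by (intro mult_left_mono) auto
  then show ?thesis using pos by (simp add: divide_simps power2_eq_square mult_ac)
qed

theorem proposition2p4:
  fixes A :: "'a::euclidean_space set" and w :: 'a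
  assumes "0 \<notin> closure A" and "w \<notin> closure A"
  shows "(inversion w \<circ> inversion 0) ` (inversion 0 ` A) = inversion w ` A
    \<and> bi_lipschitz_on (inversion 0 ` A) (inversion w \<circ> inversion 0)
    \<and> upper_box_dim (inversion 0 ` A) = upper_box_dim (inversion w ` A)
    \<and> lower_box_dim (inversion 0 ` A) = lower_box_dim (inversion w ` A)"
proof -
  have away: "\<exists>d>0. \<forall>x\<in>A. d \<le> dist p x" if p: "p \<notin> closure A" for p :: 'a
  proof -
    have "open (- closure A)" by auto
    moreover have "p \<in> - closure A" using p by auto
    ultimately obtain d where d: "d > 0" "ball p d \<subseteq> - closure A"
      using open_contains_ball by blast
    have "d \<le> dist p x" if "x \<in> A" for x
      using d(2) that closure_subset by (force simp: subset_eq not_less)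
    then show ?thesis using d(1) by blast
  qed
  obtain d0 where d0: "d0 > 0" "\<And>x. x \<in> A \<Longrightarrow> d0 \<le> norm x"
    using away[OF assms(1)] by auto
  obtain dw where dw: "dw > 0" "\<And>x. x \<in> A \<Longrightarrow> dw \<le> norm (x - w)"
    using away[OF assms(2)] by (auto simp: dist_norm norm_minus_commute)
  have A0: "x \<noteq> 0" and Aw: "x \<noteq> w" if "x \<in> A" for x
    using d0 dw that by force+
  define K1 where "K1 = 1 + norm w / dw"
  define K2 where "K2 = 1 + norm w / d0"
  have K1: "K1 > 0" and K2: "K2 > 0" using d0 dw by (auto simp: K1_def K2_def add_pos_nonneg)
  have k1: "norm x \<le> K1 * norm (x - w)" if x: "x \<in> A" for x
  proof -
    have "norm x \<le> norm (x - w) + norm w" by (metis norm_triangle_sub add.commute)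
    moreover have "norm w \<le> norm w * (norm (x - w) / dw)"
      using dw(1) dw(2)[OF x] by (simp add: divide_simps mult_left_mono)
    ultimately show ?thesis by (simp add: K1_def algebra_simps)
  qed
  have k2: "norm (x - w) \<le> K2 * norm x" if x: "x \<in> A" for x
  proof -
    have "norm (x - w) \<le> norm x + norm w" by (rule norm_triangle_ineq4)
    moreover have "norm w \<le> norm w * (norm x / d0)"
      using d0(1) d0(2)[OF x] by (simp add: divide_simps mult_left_mono)
    ultimately show ?thesis by (simp add: K2_def algebra_simps)
  qed
  have dPsi: "dist (inversion w x) (inversion w y) = dist x y / (norm (x - w) * norm (y - w))"
    if "x \<in> A" "y \<in> A" for x y using dist_inversion Aw that by blast
  have dPhi: "dist (inversion 0 x) (inversion 0 y) = dist x y / (norm x * norm y)"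
    if "x \<in> A" "y \<in> A" for x y using dist_inversion[of x 0 y] A0 that by simp
  have lipPsi: "dist (inversion w x) (inversion w y) \<le> K1^2 * dist (inversion 0 x) (inversion 0 y)"
    if "x \<in> A" "y \<in> A" for x y
    unfolding dPsi[OF that] dPhi[OF that]
    using that A0 Aw K1 k1 by (intro ratio_bound) auto
  have lipPhi: "dist (inversion 0 x) (inversion 0 y) \<le> K2^2 * dist (inversion w x) (inversion w y)"
    if "x \<in> A" "y \<in> A" for x y
    unfolding dPsi[OF that] dPhi[OF that]
    using that A0 Aw K2 k2 by (intro ratio_bound) auto
  have bPhi: "bounded (inversion 0 ` A)"
  proof (rule bounded_subset[OF bounded_cball[of 0 "1/d0"]])
    show "inversion 0 ` A \<subseteq> cball 0 (1/d0)"
      using d0 by (auto simp: norm_inversion intro!: frac_le)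
  qed
  have bPsi: "bounded (inversion w ` A)"
  proof (rule bounded_subset[OF bounded_cball[of 0 "1/dw"]])
    show "inversion w ` A \<subseteq> cball 0 (1/dw)"
      using dw by (auto simp: norm_inversion intro!: frac_le)
  qed
  have img: "(inversion w \<circ> inversion 0) ` (inversion 0 ` A) = inversion w ` A"
    unfolding image_image by (intro image_cong) (simp_all add: A0 inversion_invol)
  have bil: "bi_lipschitz_on (inversion 0 ` A) (inversion w \<circ> inversion 0)"
    unfolding bi_lipschitz_on_def
  proof (rule exI[of _ "1/K2^2"], rule exI[of _ "K1^2"], intro conjI ballI)
    show "1/K2^2 > 0" "K1^2 > 0" using K1 K2 by auto
  next
    fix a b assume "a \<in> inversion 0 ` A" "b \<in> inversion 0 ` A"
    then obtain x y where xy: "x \<in> A" "y \<in> A" "a = inversion 0 x" "b = inversion 0 y" by auto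
    have fa: "(inversion w \<circ> inversion 0) a = inversion w x"
      using xy by (simp add: inversion_invol A0)
    have fb: "(inversion w \<circ> inversion 0) b = inversion w y"
      using xy by (simp add: inversion_invol A0)
    show "1 / K2\<^sup>2 * dist a b \<le> dist ((inversion w \<circ> inversion 0) a) ((inversion w \<circ> inversion 0) b)"
      unfolding fa fb unfolding xy(3,4) using lipPhi[OF xy(1,2)] K2 by (simp add: divide_simps mult.commute)
    show "dist ((inversion w \<circ> inversion 0) a) ((inversion w \<circ> inversion 0) b) \<le> K1\<^sup>2 * dist a b"
      unfolding fa fb unfolding xy(3,4) using lipPsi[OF xy(1,2)] .
  qed
  have le1: "emeasure lborel (eps_nbhd (inversion w ` A) e)
     \<le> ennreal ((4*K1^2)^DIM('a)) * emeasure lborel (eps_nbhd (inversion 0 ` A) (e/(2*K1^2)))"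
    if "e > 0" for e
    using K1 lipPsi that by (intro pack_bound[OF bPsi]) auto
  have le2: "emeasure lborel (eps_nbhd (inversion 0 ` A) e)
     \<le> ennreal ((4*K2^2)^DIM('a)) * emeasure lborel (eps_nbhd (inversion w ` A) (e/(2*K2^2)))"
    if "e > 0" for e
    using K2 lipPhi that by (intro pack_bound[OF bPhi]) auto
  have c1: "(4*K1^2)^DIM('a) > 0" "2*K1^2 > 0" using K1 by auto
  have c2: "(4*K2^2)^DIM('a) > 0" "2*K2^2 > 0" using K2 by auto
  have up: "upper_minkowski_content s (inversion 0 ` A) = 0 \<longleftrightarrow> upper_minkowski_content s (inversion w ` A) = 0" for s
    using content_transfer(1)[OF bPhi bPsi c1 le1] content_transfer(1)[OF bPsi bPhi c2 le2] by blast
  have lo: "lower_minkowski_content s (inversion 0 ` A) = 0 \<longleftrightarrow> lower_minkowski_content s (inversion w ` A) = 0" for s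
    using content_transfer(2)[OF bPhi bPsi c1 le1] content_transfer(2)[OF bPsi bPhi c2 le2] by blast
  show ?thesis
    using img bil unfolding upper_box_dim_def lower_box_dim_def up lo by simp
qed

end
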